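(* There is an absolute constant $c>0$ such that for every $\delta'\in(0,1)$, with probability at least $1-2\delta'$ over the draw of $\mathcal D$, simultaneously for all $V\in\mathcal V$ and $\pi\in\mathcal P$, $$\Big|\mathscr R_{\mathcal D}(\hat g_{V,\pi};V,\pi)-\mathscr R_{\mathcal D}(\mathcal C^\pi_\lambda V;V,\pi)\Big|\le c\left(\epsilon_{\mathcal G,\mathcal V,\mathcal P}+\sqrt{\frac{\iota}{n}\epsilon_{\mathcal G,\mathcal V,\mathcal P}}+\frac{\iota}{n}\right),$$ where $\iota=V_{\lambda,\max}^2\ln\frac{|\mathcal V||\mathcal P||\mathcal G|}{\delta'}$ and $\hat g_{V,\pi}\in\arg\min_{g\in\mathcal G}\mathscr R_{\mathcal D}(g;V,\pi)$.
   Context: Finite MDP with state space $\mathcal S$, action space $\mathcal A$, discount $\gamma\in[0,1)$, kernel $P$, reward $R:\mathcal S\times\mathcal A\to[0,R_{\max}]$; $\lambda>0$. $(\mathbb PV)(s,a)=\sum_{s'}P(s'\mid s,a)V(s')$; $(\mathcal C^\pi_\lambda V)(s,a)=R(s,a)+\gamma(\mathbb PV)(s,a)-\lambda\ln\pi(a\mid s)$. $\mu\in\Delta(\mathcal S\times\mathcal A)$, $\|f\|^2_{2,\mu}=\mathbb E_{\mu}[f(s,a)^2]$. $V_{\lambda,\max}=(R_{\max}+\lambda\ln|\mathcal A|)/(1-\gamma)$. Finite classes $\mathcal V\subset[0,V_{\lambda,\max}]^{\mathcal S}$, $\mathcal P\subset\{\pi:\|\ln\pi\|_\infty\le V_{\lambda,\max}/\lambda\}$,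 $\mathcal G\subset[0,2V_{\lambda,\max}]^{\mathcal S\times\mathcal A}$. Dataset $\mathcal D=\{(s_i,a_i,r_i,s_i')\}_{i=1}^n$ with $(s_i,a_i)$ i.i.d. from $\mu$, $r_i=R(s_i,a_i)$, $s_i'\sim P(\cdot\mid s_i,a_i)$ independently. For a function $g:\mathcal S\times\mathcal A\to\mathbb R$, $\mathscr R_{\mathcal D}(g;V,\pi)=\frac1n\sum_i\big(g(s_i,a_i)-r_i-\gamma V(s_i')+\lambda\ln\pi(a_i\mid s_i)\big)^2$. $\epsilon_{\mathcal G,\mathcal V,\mathcal P}=\max_{V\in\mathcal V,\pi\in\mathcal P}\min_{g\in\mathcal G}\|g-\mathcal C^\pi_\lambda V\|^2_{2,\mu}$. *)

theory Defs
  imports "HOL-Probability.Probability"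
begin

text \<open>Functions are required to vanish outside
their domain (extensional representation), so that the finite classes count
genuinely distinct functions on S (resp. S x A).\<close>

definition Vmax :: "nat set \<Rightarrow> real \<Rightarrow> real \<Rightarrow> real \<Rightarrow> real" where
  "Vmax A Rmax \<gamma> lam = (Rmax + lam * ln (real (card A))) / (1 - \<gamma>)"

definition bellman ::
  "(nat \<Rightarrow> nat \<Rightarrow> real) \<Rightarrow> (nat \<Rightarrow> nat \<Rightarrow> nat pmf) \<Rightarrow> real \<Rightarrow> real \<Rightarrow>
   (nat \<Rightarrow> real) \<Rightarrow> (nat \<Rightarrow> nat \<Rightarrow> real) \<Rightarrow> nat \<Rightarrow> nat \<Rightarrow> real" where
  "bellman R P \<gamma> lam V \<pi> s a =
     R s a + \<gamma> * measure_pmf.expectation (P s a) V - lam * ln (\<pi> s a)"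

definition sqnorm :: "(nat \<times> nat) pmf \<Rightarrow> (nat \<Rightarrow> nat \<Rightarrow> real) \<Rightarrow> real" where
  "sqnorm \<mu> f = measure_pmf.expectation \<mu> (\<lambda>(s, a). (f s a)\<^sup>2)"

text \<open>Empirical risk; the dataset is D : {0..<n} -> (s_i, a_i, s_i'), with r_i = R s_i a_i.\<close>
definition emp_risk ::
  "(nat \<Rightarrow> nat \<Rightarrow> real) \<Rightarrow> real \<Rightarrow> real \<Rightarrow> nat \<Rightarrow> (nat \<Rightarrow> nat \<times> nat \<times> nat) \<Rightarrow>
   (nat \<Rightarrow> nat \<Rightarrow> real) \<Rightarrow> (nat \<Rightarrow> real) \<Rightarrow> (nat \<Rightarrow> nat \<Rightarrow> real) \<Rightarrow> real" where
  "emp_risk R \<gamma> lam n D g V \<pi> =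
     (\<Sum>i<n. (case D i of (s, a, s') \<Rightarrow>
        (g s a - R s a - \<gamma> * V s' + lam * ln (\<pi> s a))\<^sup>2)) / real n"

definition eps_approx ::
  "(nat \<times> nat) pmf \<Rightarrow> (nat \<Rightarrow> nat \<Rightarrow> real) \<Rightarrow> (nat \<Rightarrow> nat \<Rightarrow> nat pmf) \<Rightarrow> real \<Rightarrow> real \<Rightarrow>
   (nat \<Rightarrow> real) set \<Rightarrow> (nat \<Rightarrow> nat \<Rightarrow> real) set \<Rightarrow> (nat \<Rightarrow> nat \<Rightarrow> real) set \<Rightarrow> real" where
  "eps_approx \<mu> R P \<gamma> lam Vs Ps Gs =
     Max ((\<lambda>(V, \<pi>). Min ((\<lambda>g. sqnorm \<mu> (\<lambda>s a. g s a - bellman R P \<gamma> lam V \<pi> s a)) ` Gs))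
          ` (Vs \<times> Ps))"

definition sample_pmf :: "(nat \<times> nat) pmf \<Rightarrow> (nat \<Rightarrow> nat \<Rightarrow> nat pmf) \<Rightarrow> (nat \<times> nat \<times> nat) pmf" where
  "sample_pmf \<mu> P = bind_pmf \<mu> (\<lambda>(s, a). map_pmf (\<lambda>s'. (s, a, s')) (P s a))"

definition dataset_pmf :: "(nat \<times> nat) pmf \<Rightarrow> (nat \<Rightarrow> nat \<Rightarrow> nat pmf) \<Rightarrow> nat \<Rightarrow> (nat \<Rightarrow> nat \<times> nat \<times> nat) pmf" where
  "dataset_pmf \<mu> P n = Pi_pmf {..<n} (0, 0, 0) (\<lambda>_. sample_pmf \<mu> P)"

definition setting ::
  "nat set \<Rightarrow> nat set \<Rightarrow> real \<Rightarrow> real \<Rightarrow> real \<Rightarrow> (nat \<Rightarrow> nat \<Rightarrow> nat pmf) \<Rightarrow>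
   (nat \<Rightarrow> nat \<Rightarrow> real) \<Rightarrow> (nat \<times> nat) pmf \<Rightarrow>
   (nat \<Rightarrow> real) set \<Rightarrow> (nat \<Rightarrow> nat \<Rightarrow> real) set \<Rightarrow> (nat \<Rightarrow> nat \<Rightarrow> real) set \<Rightarrow> bool" where
  "setting S A \<gamma> Rmax lam P R \<mu> Vs Ps Gs \<longleftrightarrow>
     finite S \<and> S \<noteq> {} \<and> finite A \<and> A \<noteq> {} \<and>
     0 \<le> \<gamma> \<and> \<gamma> < 1 \<and> 0 < lam \<and>
     (\<forall>s\<in>S. \<forall>a\<in>A. set_pmf (P s a) \<subseteq> S) \<and>
     (\<forall>s\<in>S. \<forall>a\<in>A. 0 \<le> R s a \<and> R s a \<le> Rmax) \<and>
     set_pmf \<mu> \<subseteq> S \<times> A \<and>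
     finite Vs \<and> Vs \<noteq> {} \<and> finite Ps \<and> Ps \<noteq> {} \<and> finite Gs \<and> Gs \<noteq> {} \<and>
     (\<forall>V\<in>Vs. (\<forall>s\<in>S. 0 \<le> V s \<and> V s \<le> Vmax A Rmax \<gamma> lam) \<and> (\<forall>s. s \<notin> S \<longrightarrow> V s = 0)) \<and>
     (\<forall>\<pi>\<in>Ps. (\<forall>s\<in>S. (\<Sum>a\<in>A. \<pi> s a) = 1 \<and>
                 (\<forall>a\<in>A. 0 < \<pi> s a \<and> \<bar>ln (\<pi> s a)\<bar> \<le> Vmax A Rmax \<gamma> lam / lam)) \<and>
              (\<forall>s a. (s \<notin> S \<or> a \<notin> A) \<longrightarrow> \<pi> s a = 0)) \<and>
     (\<forall>g\<in>Gs. (\<forall>s\<in>S. \<forall>a\<in>A. 0 \<le> g s a \<and> g s a \<le> 2 * Vmax A Rmax \<gamma> lam) \<and>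
              (\<forall>s a. (s \<notin> S \<or> a \<notin> A) \<longrightarrow> g s a = 0))"

end

theory Submission
  imports Defs
begin

lemma tower:
  fixes F :: "'b \<Rightarrow> real"
  assumes fin: "finite (set_pmf M)" and finN: "\<And>x. x \<in> set_pmf M \<Longrightarrow> finite (set_pmf (N x))"
  shows "measure_pmf.expectation (bind_pmf M N) F
       = measure_pmf.expectation M (\<lambda>x. measure_pmf.expectation (N x) F)"
proof -
  define U where "U = (\<Union>x\<in>set_pmf M. set_pmf (N x))"
  have finU: "finite U" using fin finN by (auto simp: U_def)
  have "measure_pmf.expectation (bind_pmf M N) F = (\<Sum>z\<in>U. F z * pmf (bind_pmf M N) z)"
    by (rule integral_measure_pmf_real[OF finU]) (auto simp: U_def)
  also have "\<dots> = (\<Sum>z\<in>U. F z * measure_pmf.expectation M (\<lambda>x. pmf (N x) z))"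
    by (simp add: pmf_bind)
  also have "\<dots> = (\<Sum>z\<in>U. measure_pmf.expectation M (\<lambda>x. F z * pmf (N x) z))"
    by simp
  also have "\<dots> = measure_pmf.expectation M (\<lambda>x. \<Sum>z\<in>U. F z * pmf (N x) z)"
    by (rule Bochner_Integration.integral_sum[symmetric]) (simp add: integrable_measure_pmf_finite fin)
  also have "\<dots> = measure_pmf.expectation M (\<lambda>x. measure_pmf.expectation (N x) F)"
    by (intro integral_cong_AE AE_pmfI integral_measure_pmf_real[OF finU, symmetric])
       (auto simp: U_def)
  finally show ?thesis .
qed

lemma exp_le_quad:
  fixes x :: real assumes "x \<le> 1" shows "exp x \<le> 1 + x + x\<^sup>2"
proof (cases "0 \<le> x")
  case True then show ?thesis using exp_bound assms by blast
next
  case False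
  have pos: "0 < 1 - x" using False by simp
  have "1 - x \<le> exp (-x)" using exp_ge_add_one_self[of "-x"] by simp
  hence "exp x * (1 - x) \<le> exp x * exp (-x)" by (intro mult_left_mono) auto
  hence "exp x * (1 - x) \<le> 1" by (simp add: exp_minus)
  moreover have "1 \<le> (1 + x + x\<^sup>2) * (1 - x)"
  proof -
    have "(1 + x + x\<^sup>2) * (1 - x) = 1 - x^3" by (simp add: algebra_simps power2_eq_square power3_eq_cube)
    moreover have "x^3 \<le> 0" using False mult_nonneg_nonpos[of "x*x" x] by (simp add: power3_eq_cube)
    ultimately show ?thesis by simp
  qed
  ultimately have "exp x * (1 - x) \<le> (1 + x + x\<^sup>2) * (1 - x)" by linarith
  thus ?thesis using pos by simp
qed

lemma mgf_bound:
  fixes p :: "'a pmf" and \<phi> :: "'a \<Rightarrow> real"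
  assumes fin: "finite (set_pmf p)" and bnd: "\<And>z. z \<in> set_pmf p \<Longrightarrow> t * \<bar>\<phi> z\<bar> \<le> 1"
    and t: "0 \<le> t" and mean: "measure_pmf.expectation p \<phi> = 0"
    and var: "measure_pmf.expectation p (\<lambda>z. (\<phi> z)\<^sup>2) \<le> v"
  shows "measure_pmf.expectation p (\<lambda>z. exp (t * \<phi> z)) \<le> exp (t\<^sup>2 * v)"
proof -
  have int: "integrable (measure_pmf p) f" for f :: "'a \<Rightarrow> real"
    using fin by (rule integrable_measure_pmf_finite)
  have "measure_pmf.expectation p (\<lambda>z. exp (t * \<phi> z))
      \<le> measure_pmf.expectation p (\<lambda>z. 1 + t * \<phi> z + t\<^sup>2 * (\<phi> z)\<^sup>2)"
  proof (intro integral_mono_AE int AE_pmfI)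
    fix z assume z: "z \<in> set_pmf p"
    have "t * \<phi> z \<le> 1" using bnd[OF z] t
      by (metis abs_ge_self abs_mult abs_of_nonneg order.trans)
    from exp_le_quad[OF this] show "exp (t * \<phi> z) \<le> 1 + t * \<phi> z + t\<^sup>2 * (\<phi> z)\<^sup>2"
      by (simp add: power_mult_distrib)
  qed
  also have "\<dots> = 1 + t * measure_pmf.expectation p \<phi> + t\<^sup>2 * measure_pmf.expectation p (\<lambda>z. (\<phi> z)\<^sup>2)"
    by (simp add: int Bochner_Integration.integral_add)
  also have "\<dots> \<le> 1 + t\<^sup>2 * v" using mean var by (simp add: mult_left_mono)
  also have "\<dots> \<le> exp (t\<^sup>2 * v)" by (rule exp_ge_add_one_self)
  finally show ?thesis .
qed

lemma chernoff:
  fixes p :: "'a pmf" and \<phi> :: "'a \<Rightarrow> real"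
  assumes fin: "finite (set_pmf p)" and t: "0 \<le> t"
    and mgf: "measure_pmf.expectation p (\<lambda>z. exp (t * \<phi> z)) \<le> m"
  shows "measure_pmf.prob (Pi_pmf {..<n} d (\<lambda>_. p)) {D. u < (\<Sum>i<n. \<phi> (D i))}
         \<le> exp (- t * u) * m ^ n"
proof -
  define Q where "Q = Pi_pmf {..<n} d (\<lambda>_. p)"
  have finQ: "finite (set_pmf Q)" unfolding Q_def using fin
    by (subst set_Pi_pmf) (auto intro!: finite_PiE_dflt)
  have int: "integrable (measure_pmf Q) f" for f :: "_ \<Rightarrow> real"
    using finQ by (rule integrable_measure_pmf_finite)
  let ?A = "{D. u < (\<Sum>i<n. \<phi> (D i))}"
  have "measure_pmf.prob Q ?A = measure_pmf.expectation Q (indicator ?A)"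
    by simp
  also have "\<dots> \<le> measure_pmf.expectation Q (\<lambda>D. exp (t * ((\<Sum>i<n. \<phi> (D i)) - u)))"
  proof (intro integral_mono int)
    fix D show "indicator ?A D \<le> exp (t * ((\<Sum>i<n. \<phi> (D i)) - u))"
    proof (cases "D \<in> ?A")
      case True
      hence "0 \<le> t * ((\<Sum>i<n. \<phi> (D i)) - u)" using t by simp
      thus ?thesis using True by simp
    qed simp
  qed
  also have "\<dots> = measure_pmf.expectation Q (\<lambda>D. exp (- t * u) * (\<Prod>i\<in>{..<n}. exp (t * \<phi> (D i))))"
    by (intro Bochner_Integration.integral_cong refl)
       (simp add: exp_sum[symmetric] exp_add[symmetric] sum_distrib_left right_diff_distrib)
  also have "\<dots> = exp (- t * u) * measure_pmf.expectation Q (\<lambda>D. \<Prod>i\<in>{..<n}. exp (t * \<phi> (D i)))"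
    by simp
  also have "measure_pmf.expectation Q (\<lambda>D. \<Prod>i\<in>{..<n}. exp (t * \<phi> (D i)))
      = (\<Prod>i\<in>{..<n}. measure_pmf.expectation p (\<lambda>z. exp (t * \<phi> z)))"
    unfolding Q_def
    by (rule expectation_prod_Pi_pmf[where f="\<lambda>_ z. exp (t * \<phi> z)"])
       (auto intro: integrable_measure_pmf_finite[OF fin])
  also have "\<dots> = (measure_pmf.expectation p (\<lambda>z. exp (t * \<phi> z))) ^ n" by simp
  also have "\<dots> \<le> m ^ n"
    by (intro power_mono mgf integral_nonneg_AE) auto
  finally show ?thesis unfolding Q_def by simp
qed

lemma choose_t:
  fixes b x L u :: real
  assumes b: "0 < b" and x: "0 \<le> x" and L: "0 \<le> L" and u: "u = 2 * sqrt (x * L) + 2 * b * L"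
  shows "\<exists>t. 0 \<le> t \<and> t * b \<le> 1 \<and> - t * u + x * t\<^sup>2 \<le> - L"
proof (cases "x \<le> L * b\<^sup>2")
  case True
  have "- (1/b) * u \<le> - 2 * L"
  proof -
    have "(1/b) * u \<ge> (1/b) * (2*b*L)" using u b x L by (intro mult_left_mono) auto
    thus ?thesis using b by simp
  qed
  moreover have "x * (1/b)\<^sup>2 \<le> L" using True b by (simp add: power2_eq_square field_simps)
  ultimately show ?thesis using b by (intro exI[of _ "1/b"]) auto
next
  case False
  hence xpos: "0 < x" using L b by (smt (verit) mult_nonneg_nonneg zero_le_power2)
  define t where "t = sqrt (L / x)"
  have t0: "0 \<le> t" unfolding t_def using L x by simp
  have t2: "t\<^sup>2 = L / x" unfolding t_def using L x by simp
  have "(t * b)\<^sup>2 = (L * b\<^sup>2) / x" using t2 by (simp add: power_mult_distrib)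
  also have "\<dots> \<le> 1" using False xpos by simp
  finally have "(t * b)\<^sup>2 \<le> 1" .
  hence tb: "t * b \<le> 1" using power2_le_imp_le[of "t*b" 1] by simp
  have "t * sqrt (x * L) = L"
    unfolding t_def using L xpos
    by (simp add: real_sqrt_mult[symmetric])
  moreover have "0 \<le> t * (2 * b * L)" using t0 b L by simp
  ultimately have "- t * u \<le> - 2 * L" using u by (simp add: algebra_simps)
  moreover have "x * t\<^sup>2 = L" using t2 xpos by simp
  ultimately show ?thesis using t0 tb by (intro exI[of _ t]) auto
qed

lemma bernstein:
  fixes p :: "'a pmf" and \<phi> :: "'a \<Rightarrow> real"
  assumes fin: "finite (set_pmf p)" and b: "0 \<le> b"
    and bnd: "\<And>z. z \<in> set_pmf p \<Longrightarrow> \<bar>\<phi> z\<bar> \<le> b"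
    and mean: "measure_pmf.expectation p \<phi> = 0"
    and var: "measure_pmf.expectation p (\<lambda>z. (\<phi> z)\<^sup>2) \<le> v" and L: "0 \<le> L"
  shows "measure_pmf.prob (Pi_pmf {..<n} d (\<lambda>_. p))
           {D. 2 * sqrt (real n * v * L) + 2 * b * L < (\<Sum>i<n. \<phi> (D i))} \<le> exp (- L)"
proof -
  have "0 \<le> measure_pmf.expectation p (\<lambda>z. (\<phi> z)\<^sup>2)" by (rule integral_nonneg_AE) auto
  hence v: "0 \<le> v" using var by linarith
  show ?thesis
  proof (cases "b = 0")
    case True
    have "measure_pmf.prob (Pi_pmf {..<n} d (\<lambda>_. p))
           {D. 2 * sqrt (real n * v * L) + 2 * b * L < (\<Sum>i<n. \<phi> (D i))} = 0"
    proof (subst measure_pmf_zero_iff, safe)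
      fix D assume D: "D \<in> set_pmf (Pi_pmf {..<n} d (\<lambda>_. p))"
        and lt: "2 * sqrt (real n * v * L) + 2 * b * L < (\<Sum>i<n. \<phi> (D i))"
      have "\<forall>i<n. D i \<in> set_pmf p" using D by (auto simp: set_Pi_pmf PiE_dflt_def)
      hence "(\<Sum>i<n. \<phi> (D i)) = 0" using bnd True by (intro sum.neutral) fastforce
      moreover have "0 \<le> real n * v * L" using v L by simp
      ultimately show "D \<in> {}" using lt True by simp
    qed
    thus ?thesis by simp
  next
    case False
    hence bpos: "0 < b" using b by simp
    obtain t where t: "0 \<le> t" "t * b \<le> 1"
      and key: "- t * (2 * sqrt (real n * v * L) + 2 * b * L) + (real n * v) * t\<^sup>2 \<le> - L"
      using choose_t[OF bpos _ L refl, of "real n * v"] v by auto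
    have mgf: "measure_pmf.expectation p (\<lambda>z. exp (t * \<phi> z)) \<le> exp (t\<^sup>2 * v)"
    proof (rule mgf_bound[OF fin _ t(1) mean var])
      fix z assume "z \<in> set_pmf p"
      hence "t * \<bar>\<phi> z\<bar> \<le> t * b" using bnd t(1) by (intro mult_left_mono) auto
      thus "t * \<bar>\<phi> z\<bar> \<le> 1" using t(2) by linarith
    qed
    have "measure_pmf.prob (Pi_pmf {..<n} d (\<lambda>_. p))
           {D. 2 * sqrt (real n * v * L) + 2 * b * L < (\<Sum>i<n. \<phi> (D i))}
        \<le> exp (- t * (2 * sqrt (real n * v * L) + 2 * b * L)) * exp (t\<^sup>2 * v) ^ n"
      by (rule chernoff[OF fin t(1) mgf])
    also have "\<dots> = exp (- t * (2 * sqrt (real n * v * L) + 2 * b * L) + (real n * v) * t\<^sup>2)"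
    proof -
      have "exp (t\<^sup>2 * v) ^ n = exp ((real n * v) * t\<^sup>2)"
        by (simp add: exp_of_nat_mult[symmetric] algebra_simps)
      thus ?thesis by (simp add: mult_exp_exp algebra_simps)
    qed
    also have "\<dots> \<le> exp (- L)" using key by simp
    finally show ?thesis .
  qed
qed

lemma arith_bounds:
  fixes G F Y W :: real
  assumes "\<bar>G\<bar> \<le> 2*W" "\<bar>F\<bar> \<le> 3*W" "\<bar>Y\<bar> \<le> 3*W"
  shows "\<bar>(G - Y)\<^sup>2 - (F - Y)\<^sup>2\<bar> \<le> 55 * W\<^sup>2"
    and "((G - Y)\<^sup>2 - (F - Y)\<^sup>2)\<^sup>2 \<le> 121 * W\<^sup>2 * (G - F)\<^sup>2"
proof -
  have eq: "(G - Y)\<^sup>2 - (F - Y)\<^sup>2 = (G - F) * (G + F - 2*Y)"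
    by (simp add: power2_eq_square algebra_simps)
  have W0: "0 \<le> W" using assms(1) by linarith
  have h: "\<bar>G - F\<bar> \<le> 5*W" using assms by linarith
  have k: "\<bar>G + F - 2*Y\<bar> \<le> 11*W" using assms by linarith
  have "\<bar>(G - F) * (G + F - 2*Y)\<bar> \<le> (5*W) * (11*W)"
    unfolding abs_mult by (intro mult_mono h k) (auto simp: W0)
  thus "\<bar>(G - Y)\<^sup>2 - (F - Y)\<^sup>2\<bar> \<le> 55 * W\<^sup>2" using eq by (simp add: power2_eq_square)
  have "(G + F - 2*Y)\<^sup>2 \<le> (11*W)\<^sup>2"
    using power_mono[OF k, of 2] by simp
  hence "(G - F)\<^sup>2 * (G + F - 2*Y)\<^sup>2 \<le> (G - F)\<^sup>2 * (11*W)\<^sup>2" by (intro mult_left_mono) auto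
  show "((G - Y)\<^sup>2 - (F - Y)\<^sup>2)\<^sup>2 \<le> 121 * W\<^sup>2 * (G - F)\<^sup>2"
  proof -
    have "((G - Y)\<^sup>2 - (F - Y)\<^sup>2)\<^sup>2 = (G - F)\<^sup>2 * (G + F - 2*Y)\<^sup>2"
      unfolding eq by (simp add: power_mult_distrib)
    also have "\<dots> \<le> (G - F)\<^sup>2 * (11*W)\<^sup>2" by fact
    also have "\<dots> = 121 * W\<^sup>2 * (G - F)\<^sup>2" by (simp add: power_mult_distrib)
    finally show ?thesis .
  qed
qed

lemma setting_facts:
  assumes st: "setting S A \<gamma> Rmax lam P R \<mu> Vs Ps Gs"
  defines "W \<equiv> Vmax A Rmax \<gamma> lam"
  shows "0 \<le> W" "Rmax \<le> W"
    "finite (set_pmf (sample_pmf \<mu> P))"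
    "\<And>z. z \<in> set_pmf (sample_pmf \<mu> P) \<Longrightarrow> fst z \<in> S \<and> fst (snd z) \<in> A \<and> snd (snd z) \<in> S"
proof -
  from st have fS: "finite S" "S \<noteq> {}" and fA: "finite A" "A \<noteq> {}"
    and g: "0 \<le> \<gamma>" "\<gamma> < 1" and lam: "0 < lam"
    and PS: "\<forall>s\<in>S. \<forall>a\<in>A. set_pmf (P s a) \<subseteq> S"
    and RR: "\<forall>s\<in>S. \<forall>a\<in>A. 0 \<le> R s a \<and> R s a \<le> Rmax"
    and mu: "set_pmf \<mu> \<subseteq> S \<times> A"
    unfolding setting_def by auto
  obtain s0 a0 where "s0 \<in> S" "a0 \<in> A" using fS fA by auto
  hence Rm: "0 \<le> Rmax" using RR by force
  have "1 \<le> card A" using fA by (simp add: Suc_le_eq card_gt_0_iff)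
  hence lnA: "0 \<le> ln (real (card A))" by simp
  have num: "Rmax \<le> Rmax + lam * ln (real (card A))" using lam lnA by simp
  have den: "0 < 1 - \<gamma>" "1 - \<gamma> \<le> 1" using g by auto
  have "Rmax \<le> (Rmax + lam * ln (real (card A))) / (1 - \<gamma>)"
  proof -
    have "Rmax * (1 - \<gamma>) \<le> Rmax" using Rm g by (simp add: mult_left_le)
    also have "\<dots> \<le> Rmax + lam * ln (real (card A))" by (rule num)
    finally show ?thesis using den by (simp add: le_divide_eq)
  qed
  thus "Rmax \<le> W" unfolding W_def Vmax_def .
  thus "0 \<le> W" using Rm by linarith
  have sub: "set_pmf (sample_pmf \<mu> P) \<subseteq> S \<times> A \<times> S"
    proof
    fix z assume "z \<in> set_pmf (sample_pmf \<mu> P)"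
    then obtain s a s' where sa: "(s, a) \<in> set_pmf \<mu>" and s': "s' \<in> set_pmf (P s a)" and z: "z = (s, a, s')"
      by (auto simp: sample_pmf_def split: prod.splits)
    from sa mu have "s \<in> S" "a \<in> A" by auto
    with s' PS have "s' \<in> S" by blast
    thus "z \<in> S \<times> A \<times> S" using z \<open>s \<in> S\<close> \<open>a \<in> A\<close> by simp
  qed
  thus "finite (set_pmf (sample_pmf \<mu> P))" using fS fA by (auto intro: finite_subset)
  fix z assume "z \<in> set_pmf (sample_pmf \<mu> P)"
  thus "fst z \<in> S \<and> fst (snd z) \<in> A \<and> snd (snd z) \<in> S" using sub by auto
qed

lemma tower_sample:
  fixes F :: "nat \<times> nat \<times> nat \<Rightarrow> real"
  assumes fin: "finite (set_pmf \<mu>)" and finP: "\<And>s a. (s, a) \<in> set_pmf \<mu> \<Longrightarrow> finite (set_pmf (P s a))"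
  shows "measure_pmf.expectation (sample_pmf \<mu> P) F
       = measure_pmf.expectation \<mu> (\<lambda>(s, a). measure_pmf.expectation (P s a) (\<lambda>s'. F (s, a, s')))"
  unfolding sample_pmf_def
  by (subst tower[OF fin]) (auto simp: finP split: prod.splits intro!: Bochner_Integration.integral_cong)

definition ell ::
  "(nat \<Rightarrow> nat \<Rightarrow> real) \<Rightarrow> (nat \<Rightarrow> nat \<Rightarrow> nat pmf) \<Rightarrow> real \<Rightarrow> real \<Rightarrow>
   (nat \<Rightarrow> real) \<Rightarrow> (nat \<Rightarrow> nat \<Rightarrow> real) \<Rightarrow> (nat \<Rightarrow> nat \<Rightarrow> real) \<Rightarrow> nat \<times> nat \<times> nat \<Rightarrow> real" where
  "ell R P \<gamma> lam V \<pi> g z = (case z of (s, a, s') \<Rightarrow>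
     (g s a - (R s a + \<gamma> * V s' - lam * ln (\<pi> s a)))\<^sup>2
     - (bellman R P \<gamma> lam V \<pi> s a - (R s a + \<gamma> * V s' - lam * ln (\<pi> s a)))\<^sup>2)"

lemma emp_risk_diff:
  "emp_risk R \<gamma> lam n D g V \<pi> - emp_risk R \<gamma> lam n D (bellman R P \<gamma> lam V \<pi>) V \<pi>
   = (\<Sum>i<n. ell R P \<gamma> lam V \<pi> g (D i)) / real n"
  unfolding emp_risk_def ell_def
  by (simp add: diff_divide_distrib[symmetric] sum_subtractf[symmetric] split: prod.splits
        add: algebra_simps)

lemma triple_facts:
  assumes st: "setting S A \<gamma> Rmax lam P R \<mu> Vs Ps Gs"
    and V: "V \<in> Vs" and pi: "\<pi> \<in> Ps" and g: "g \<in> Gs"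
  defines "W \<equiv> Vmax A Rmax \<gamma> lam"
    and "d \<equiv> sqnorm \<mu> (\<lambda>s a. g s a - bellman R P \<gamma> lam V \<pi> s a)"
  shows "\<And>z. z \<in> set_pmf (sample_pmf \<mu> P) \<Longrightarrow> \<bar>ell R P \<gamma> lam V \<pi> g z\<bar> \<le> 55 * W\<^sup>2"
    and "measure_pmf.expectation (sample_pmf \<mu> P) (ell R P \<gamma> lam V \<pi> g) = d"
    and "measure_pmf.expectation (sample_pmf \<mu> P) (\<lambda>z. (ell R P \<gamma> lam V \<pi> g z)\<^sup>2) \<le> 121 * W\<^sup>2 * d"
    and "0 \<le> d"
proof -
  from st have fS: "finite S" and fA: "finite A"
    and gam: "0 \<le> \<gamma>" "\<gamma> < 1" and lam: "0 < lam"
    and PS: "\<forall>s\<in>S. \<forall>a\<in>A. set_pmf (P s a) \<subseteq> S"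
    and RR: "\<forall>s\<in>S. \<forall>a\<in>A. 0 \<le> R s a \<and> R s a \<le> Rmax"
    and mu: "set_pmf \<mu> \<subseteq> S \<times> A"
    and VV: "\<forall>s\<in>S. 0 \<le> V s \<and> V s \<le> W"
    and PP: "\<forall>s\<in>S. \<forall>a\<in>A. 0 < \<pi> s a \<and> \<bar>ln (\<pi> s a)\<bar> \<le> W / lam"
    and GG: "\<forall>s\<in>S. \<forall>a\<in>A. 0 \<le> g s a \<and> g s a \<le> 2 * W"
    using V pi g unfolding setting_def W_def by auto
  have W0: "0 \<le> W" and RW: "Rmax \<le> W" using setting_facts[OF st] unfolding W_def by auto
  have finmu: "finite (set_pmf \<mu>)" using mu fS fA by (auto intro: finite_subset)
  have finP: "finite (set_pmf (P s a))" if "(s, a) \<in> set_pmf \<mu>" for s a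
  proof -
    have "s \<in> S" "a \<in> A" using that mu by auto
    hence "set_pmf (P s a) \<subseteq> S" using PS by blast
    thus ?thesis using fS by (rule finite_subset)
  qed
  define f where "f = bellman R P \<gamma> lam V \<pi>"
  define EV where "EV s a = measure_pmf.expectation (P s a) V" for s a
  have f_eq: "f s a = R s a + \<gamma> * EV s a - lam * ln (\<pi> s a)" for s a
    unfolding f_def EV_def bellman_def by simp
  have EVb: "0 \<le> EV s a \<and> EV s a \<le> W" if "s \<in> S" "a \<in> A" for s a
  proof -
    have sub: "set_pmf (P s a) \<subseteq> S" using PS that by auto
    have finPs: "finite (set_pmf (P s a))" using sub fS by (auto intro: finite_subset)
    have "0 \<le> EV s a" unfolding EV_def
      by (intro integral_nonneg_AE AE_pmfI) (use sub VV in auto)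
    moreover have "EV s a \<le> measure_pmf.expectation (P s a) (\<lambda>_. W)" unfolding EV_def
      by (intro integral_mono_AE AE_pmfI integrable_measure_pmf_finite finPs) (use sub VV in auto)
    ultimately show ?thesis by simp
  qed
  have lnb: "\<bar>lam * ln (\<pi> s a)\<bar> \<le> W" if "s \<in> S" "a \<in> A" for s a
  proof -
    have "\<bar>ln (\<pi> s a)\<bar> \<le> W / lam" using PP that by auto
    hence "lam * \<bar>ln (\<pi> s a)\<bar> \<le> W" using lam by (simp add: field_simps)
    thus ?thesis using lam by (simp add: abs_mult)
  qed
  have gx: "\<gamma> * x \<le> W \<and> 0 \<le> \<gamma> * x" if "0 \<le> x" "x \<le> W" for x
  proof -
    have "\<gamma> * x \<le> 1 * x" using that gam by (intro mult_right_mono) auto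
    thus ?thesis using that gam by simp
  qed
  have Fb: "\<bar>f s a\<bar> \<le> 3 * W" if "s \<in> S" "a \<in> A" for s a
  proof -
    have "0 \<le> R s a" "R s a \<le> Rmax" using RR that by auto
    thus ?thesis using f_eq[of s a] lnb[OF that] gx[of "EV s a"] EVb[OF that] RW by (simp add: abs_le_iff)
  qed
  have Yb: "\<bar>R s a + \<gamma> * V s' - lam * ln (\<pi> s a)\<bar> \<le> 3 * W" if "s \<in> S" "a \<in> A" "s' \<in> S" for s a s'
  proof -
    have "0 \<le> R s a" "R s a \<le> Rmax" using RR that by auto
    moreover have "0 \<le> V s'" "V s' \<le> W" using VV that by auto
    ultimately show ?thesis using lnb[OF that(1,2)] gx[of "V s'"] RW by (simp add: abs_le_iff)
  qed
  have Gb: "\<bar>g s a\<bar> \<le> 2 * W" if "s \<in> S" "a \<in> A" for s a using GG that by auto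
  have sampS: "\<And>z. z \<in> set_pmf (sample_pmf \<mu> P) \<Longrightarrow> fst z \<in> S \<and> fst (snd z) \<in> A \<and> snd (snd z) \<in> S"
    using setting_facts[OF st] by blast
  have finp: "finite (set_pmf (sample_pmf \<mu> P))" using setting_facts[OF st] by blast
  have ab: "\<bar>ell R P \<gamma> lam V \<pi> g z\<bar> \<le> 55 * W\<^sup>2
      \<and> (ell R P \<gamma> lam V \<pi> g z)\<^sup>2 \<le> 121 * W\<^sup>2 * (g (fst z) (fst (snd z)) - f (fst z) (fst (snd z)))\<^sup>2"
    if "z \<in> set_pmf (sample_pmf \<mu> P)" for z
  proof -
    obtain s a s' where z: "z = (s, a, s')" by (cases z) auto
    have m: "s \<in> S" "a \<in> A" "s' \<in> S" using sampS[OF that] z by auto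
    show ?thesis unfolding z ell_def f_def[symmetric]
      using arith_bounds[OF Gb[OF m(1,2)] Fb[OF m(1,2)] Yb[OF m]] by simp
  qed
  thus "\<And>z. z \<in> set_pmf (sample_pmf \<mu> P) \<Longrightarrow> \<bar>ell R P \<gamma> lam V \<pi> g z\<bar> \<le> 55 * W\<^sup>2" by blast
  have dd: "d = measure_pmf.expectation \<mu> (\<lambda>(s, a). (g s a - f s a)\<^sup>2)"
    unfolding d_def sqnorm_def f_def by simp
  show "0 \<le> d" unfolding dd by (intro integral_nonneg_AE) auto
  show "measure_pmf.expectation (sample_pmf \<mu> P) (ell R P \<gamma> lam V \<pi> g) = d"
  proof -
    have "measure_pmf.expectation (sample_pmf \<mu> P) (ell R P \<gamma> lam V \<pi> g)
        = measure_pmf.expectation \<mu> (\<lambda>(s, a). measure_pmf.expectation (P s a) (\<lambda>s'. ell R P \<gamma> lam V \<pi> g (s, a, s')))"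
      by (rule tower_sample[OF finmu finP])
    also have "\<dots> = measure_pmf.expectation \<mu> (\<lambda>(s, a). (g s a - f s a)\<^sup>2)"
    proof -
      have pw: "measure_pmf.expectation (P s a) (\<lambda>s'. ell R P \<gamma> lam V \<pi> g (s, a, s')) = (g s a - f s a)\<^sup>2"
        if sa: "(s, a) \<in> set_pmf \<mu>" for s a
      proof -
      define c0 where "c0 = (g s a - f s a)\<^sup>2 + 2 * (g s a - f s a) * \<gamma> * EV s a"
      define c1 where "c1 = 2 * (g s a - f s a) * \<gamma>"
      have "ell R P \<gamma> lam V \<pi> g (s, a, s') = c0 - c1 * V s'" for s'
        unfolding ell_def f_def[symmetric] c0_def c1_def
        by (simp add: f_eq power2_eq_square algebra_simps)
      hence "measure_pmf.expectation (P s a) (\<lambda>s'. ell R P \<gamma> lam V \<pi> g (s, a, s'))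
          = measure_pmf.expectation (P s a) (\<lambda>s'. c0 - c1 * V s')" by simp
      also have "\<dots> = c0 - c1 * EV s a"
        unfolding EV_def using finP[OF sa]
        by (simp add: integrable_measure_pmf_finite Bochner_Integration.integral_diff)
      also have "\<dots> = (g s a - f s a)\<^sup>2" unfolding c0_def c1_def by simp
      finally show ?thesis .
      qed
      show ?thesis by (intro integral_cong_AE AE_pmfI) (auto split: prod.splits simp: pw)
    qed
    finally show ?thesis unfolding dd .
  qed
  show "measure_pmf.expectation (sample_pmf \<mu> P) (\<lambda>z. (ell R P \<gamma> lam V \<pi> g z)\<^sup>2) \<le> 121 * W\<^sup>2 * d"
  proof -
    have "measure_pmf.expectation (sample_pmf \<mu> P) (\<lambda>z. (ell R P \<gamma> lam V \<pi> g z)\<^sup>2)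
       \<le> measure_pmf.expectation (sample_pmf \<mu> P) (\<lambda>z. 121 * W\<^sup>2 * (g (fst z) (fst (snd z)) - f (fst z) (fst (snd z)))\<^sup>2)"
      by (intro integral_mono_AE AE_pmfI integrable_measure_pmf_finite finp) (use ab in blast)
    also have "\<dots> = 121 * W\<^sup>2 * measure_pmf.expectation (sample_pmf \<mu> P) (\<lambda>z. (g (fst z) (fst (snd z)) - f (fst z) (fst (snd z)))\<^sup>2)"
      by simp
    also have "measure_pmf.expectation (sample_pmf \<mu> P) (\<lambda>z. (g (fst z) (fst (snd z)) - f (fst z) (fst (snd z)))\<^sup>2) = d"
      unfolding dd by (subst tower_sample[OF finmu finP]) (auto split: prod.splits)
    finally show ?thesis .
  qed
qed

lemma triple_prob:
  assumes st: "setting S A \<gamma> Rmax lam P R \<mu> Vs Ps Gs"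
    and V: "V \<in> Vs" and pi: "\<pi> \<in> Ps" and g: "g \<in> Gs" and L: "0 \<le> L"
  defines "W \<equiv> Vmax A Rmax \<gamma> lam"
    and "d \<equiv> sqnorm \<mu> (\<lambda>s a. g s a - bellman R P \<gamma> lam V \<pi> s a)"
  shows "measure_pmf.prob (dataset_pmf \<mu> P n)
           {D. 2 * sqrt (real n * (121 * W\<^sup>2 * d) * L) + 2 * (110 * W\<^sup>2) * L
               < (\<Sum>i<n. ell R P \<gamma> lam V \<pi> g (D i) - d)} \<le> exp (- L)"
    and "measure_pmf.prob (dataset_pmf \<mu> P n)
           {D. 2 * sqrt (real n * (121 * W\<^sup>2 * d) * L) + 2 * (110 * W\<^sup>2) * L
               < (\<Sum>i<n. d - ell R P \<gamma> lam V \<pi> g (D i))} \<le> exp (- L)"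
proof -
  let ?p = "sample_pmf \<mu> P"
  let ?l = "ell R P \<gamma> lam V \<pi> g"
  note tf = triple_facts[OF st V pi g, folded W_def d_def]
  have finp: "finite (set_pmf ?p)" using setting_facts[OF st] by blast
  have int: "integrable (measure_pmf ?p) f" for f :: "_ \<Rightarrow> real"
    using finp by (rule integrable_measure_pmf_finite)
  have d55: "d \<le> 55 * W\<^sup>2"
  proof -
    have "d = measure_pmf.expectation ?p ?l" using tf(2) by simp
    also have "\<dots> \<le> measure_pmf.expectation ?p (\<lambda>_. 55 * W\<^sup>2)"
      by (intro integral_mono_AE int AE_pmfI) (use tf(1) in force)
    finally show ?thesis by simp
  qed
  have d0: "0 \<le> d" by (rule tf(4))
  have b0: "0 \<le> 110 * W\<^sup>2" by simp
  have bnd1: "\<bar>?l z - d\<bar> \<le> 110 * W\<^sup>2" if "z \<in> set_pmf ?p" for z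
    using tf(1)[OF that] d55 d0 by (simp add: abs_le_iff) 
  have bnd2: "\<bar>d - ?l z\<bar> \<le> 110 * W\<^sup>2" if "z \<in> set_pmf ?p" for z
    using bnd1[OF that] by (simp add: abs_minus_commute)
  have mean1: "measure_pmf.expectation ?p (\<lambda>z. ?l z - d) = 0"
    using tf(2) by (simp add: int Bochner_Integration.integral_diff)
  have mean2: "measure_pmf.expectation ?p (\<lambda>z. d - ?l z) = 0"
    using tf(2) by (simp add: int Bochner_Integration.integral_diff)
  have var1: "measure_pmf.expectation ?p (\<lambda>z. (?l z - d)\<^sup>2) \<le> 121 * W\<^sup>2 * d"
  proof -
    have "measure_pmf.expectation ?p (\<lambda>z. (?l z - d)\<^sup>2)
        = measure_pmf.expectation ?p (\<lambda>z. (?l z)\<^sup>2 - 2 * d * ?l z + d\<^sup>2)"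
      by (simp add: power2_diff algebra_simps)
    also have "\<dots> = measure_pmf.expectation ?p (\<lambda>z. (?l z)\<^sup>2) - 2 * d * measure_pmf.expectation ?p ?l + d\<^sup>2"
      by (simp add: int Bochner_Integration.integral_diff Bochner_Integration.integral_add)
    also have "\<dots> = measure_pmf.expectation ?p (\<lambda>z. (?l z)\<^sup>2) - d\<^sup>2"
      using tf(2) by (simp add: power2_eq_square)
    also have "\<dots> \<le> 121 * W\<^sup>2 * d" using tf(3) zero_le_power2[of d] by linarith
    finally show ?thesis .
  qed
  have var2: "measure_pmf.expectation ?p (\<lambda>z. (d - ?l z)\<^sup>2) \<le> 121 * W\<^sup>2 * d"
    using var1 by (simp add: power2_commute)
  show "measure_pmf.prob (dataset_pmf \<mu> P n)
           {D. 2 * sqrt (real n * (121 * W\<^sup>2 * d) * L) + 2 * (110 * W\<^sup>2) * L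
               < (\<Sum>i<n. ell R P \<gamma> lam V \<pi> g (D i) - d)} \<le> exp (- L)"
    unfolding dataset_pmf_def
    by (rule bernstein[OF finp b0 bnd1 mean1 var1 L])
  show "measure_pmf.prob (dataset_pmf \<mu> P n)
           {D. 2 * sqrt (real n * (121 * W\<^sup>2 * d) * L) + 2 * (110 * W\<^sup>2) * L
               < (\<Sum>i<n. d - ell R P \<gamma> lam V \<pi> g (D i))} \<le> exp (- L)"
    unfolding dataset_pmf_def
    by (rule bernstein[OF finp b0 bnd2 mean2 var2 L])
qed

lemma conv:
  fixes Sl d W L :: real
  assumes n: "0 < n" and d: "0 \<le> d" and L: "0 \<le> L"
    and h: "\<bar>Sl - real n * d\<bar> \<le> 2 * sqrt (real n * (121 * W\<^sup>2 * d) * L) + 2 * (110 * W\<^sup>2) * L"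
  shows "\<bar>Sl / real n - d\<bar> \<le> 22 * sqrt (d * (W\<^sup>2 * L / real n)) + 220 * (W\<^sup>2 * L / real n)"
proof -
  have eq: "real n * (121 * W\<^sup>2 * d) * L = (11 * real n)\<^sup>2 * (d * (W\<^sup>2 * L / real n))"
    using n by (simp add: power2_eq_square field_simps)
  have sq: "sqrt (real n * (121 * W\<^sup>2 * d) * L) = 11 * real n * sqrt (d * (W\<^sup>2 * L / real n))"
  proof -
    have "sqrt (real n * (121 * W\<^sup>2 * d) * L) = sqrt ((11 * real n)\<^sup>2) * sqrt (d * (W\<^sup>2 * L / real n))"
      unfolding eq by (rule real_sqrt_mult)
    also have "sqrt ((11 * real n)\<^sup>2) = 11 * real n" by (rule real_sqrt_abs[THEN trans]) simp
    finally show ?thesis .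
  qed
  have "\<bar>Sl / real n - d\<bar> = \<bar>Sl - real n * d\<bar> / real n" using n by (simp add: field_simps)
  also have "\<dots> \<le> (2 * sqrt (real n * (121 * W\<^sup>2 * d) * L) + 2 * (110 * W\<^sup>2) * L) / real n"
    using h n by (simp add: divide_right_mono)
  also have "\<dots> = 22 * sqrt (d * (W\<^sup>2 * L / real n)) + 220 * (W\<^sup>2 * L / real n)"
    unfolding sq using n by (simp add: field_simps)
  finally show ?thesis .
qed

lemma det_bound:
  fixes Dh Ds dh ds eps x :: real
  assumes h1: "\<bar>Dh - dh\<bar> \<le> 22 * sqrt (dh * x) + 220 * x"
    and h2: "\<bar>Ds - ds\<bar> \<le> 22 * sqrt (ds * x) + 220 * x"
    and le: "Dh \<le> Ds" and dh: "0 \<le> dh" and ds: "0 \<le> ds" and dse: "ds \<le> eps" and x: "0 \<le> x"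
  shows "\<bar>Dh\<bar> \<le> 341 * (eps + sqrt (x * eps) + x)"
proof -
  have e0: "0 \<le> eps" using ds dse by linarith
  have s0: "0 \<le> sqrt (x * eps)" using x e0 by simp
  have "ds * x \<le> eps * x" using dse x by (rule mult_right_mono)
  hence "sqrt (ds * x) \<le> sqrt (x * eps)" by (simp add: mult.commute)
  hence up: "Dh \<le> eps + 22 * sqrt (x * eps) + 220 * x" using h2 le dse by linarith
  have "0 \<le> (sqrt dh - 11 * sqrt x)\<^sup>2" by simp
  hence "0 \<le> dh - 22 * sqrt (dh * x) + 121 * x"
    using dh x by (simp add: power2_diff real_sqrt_mult power_mult_distrib algebra_simps)
  hence lo: "- 341 * x \<le> Dh" using h1 by linarith
  have a1: "Dh \<le> 341 * eps + 341 * sqrt (x * eps) + 341 * x" using up e0 s0 x by linarith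
  have a2: "- Dh \<le> 341 * eps + 341 * sqrt (x * eps) + 341 * x" using lo e0 s0 x by linarith
  show ?thesis using a1 a2 by (simp add: abs_le_iff algebra_simps)
qed

theorem mainTheorem8:
  shows "\<exists>c::real. c > 0 \<and>
    (\<forall>(S::nat set) (A::nat set) \<gamma> Rmax lam P R \<mu> Vs Ps Gs (n::nat) \<delta>.
      setting S A \<gamma> Rmax lam P R \<mu> Vs Ps Gs \<and> 0 < n \<and> 0 < \<delta> \<and> \<delta> < 1 \<longrightarrow>
      (let \<epsilon> = eps_approx \<mu> R P \<gamma> lam Vs Ps Gs;
           \<iota> = (Vmax A Rmax \<gamma> lam)\<^sup>2 *
               ln (real (card Vs) * real (card Ps) * real (card Gs) / \<delta>)
       in measure_pmf.prob (dataset_pmf \<mu> P n)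
            {D. \<forall>V\<in>Vs. \<forall>\<pi>\<in>Ps. \<forall>g\<in>Gs.
                  (\<forall>g'\<in>Gs. emp_risk R \<gamma> lam n D g V \<pi> \<le> emp_risk R \<gamma> lam n D g' V \<pi>) \<longrightarrow>
                  \<bar>emp_risk R \<gamma> lam n D g V \<pi> - emp_risk R \<gamma> lam n D (bellman R P \<gamma> lam V \<pi>) V \<pi>\<bar>
                  \<le> c * (\<epsilon> + sqrt (\<iota> / real n * \<epsilon>) + \<iota> / real n)}
          \<ge> 1 - 2 * \<delta>))"
proof (rule exI[of _ 341], intro conjI allI impI)
  show "(0::real) < 341" by simp
next
  fix S A :: "nat set" and \<gamma> Rmax lam P R \<mu> Vs Ps Gs and n :: nat and \<delta> :: real
  assume H: "setting S A \<gamma> Rmax lam P R \<mu> Vs Ps Gs \<and> 0 < n \<and> 0 < \<delta> \<and> \<delta> < 1"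
  hence st: "setting S A \<gamma> Rmax lam P R \<mu> Vs Ps Gs" and n: "0 < n" and dl: "0 < \<delta>" "\<delta> < 1" by auto
  from st have fin: "finite Vs" "Vs \<noteq> {}" "finite Ps" "Ps \<noteq> {}" "finite Gs" "Gs \<noteq> {}"
    unfolding setting_def by auto
  define W where "W = Vmax A Rmax \<gamma> lam"
  define N where "N = real (card Vs) * real (card Ps) * real (card Gs)"
  define L where "L = ln (N / \<delta>)"
  define eps where "eps = eps_approx \<mu> R P \<gamma> lam Vs Ps Gs"
  define x where "x = W\<^sup>2 * L / real n"
  define dd where "dd V \<pi> g = sqnorm \<mu> (\<lambda>s a. g s a - bellman R P \<gamma> lam V \<pi> s a)" for V \<pi> g
  define thr where "thr V \<pi> g = 2 * sqrt (real n * (121 * W\<^sup>2 * dd V \<pi> g) * L) + 2 * (110 * W\<^sup>2) * L" for V \<pi> g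
  define Bp where "Bp V \<pi> g = {D. thr V \<pi> g < (\<Sum>i<n. ell R P \<gamma> lam V \<pi> g (D i) - dd V \<pi> g)}" for V \<pi> g
  define Bm where "Bm V \<pi> g = {D. thr V \<pi> g < (\<Sum>i<n. dd V \<pi> g - ell R P \<gamma> lam V \<pi> g (D i))}" for V \<pi> g
  define I where "I = Vs \<times> Ps \<times> Gs"
  define Bad where "Bad = (\<Union>t\<in>I. (case t of (V, \<pi>, g) \<Rightarrow> Bp V \<pi> g \<union> Bm V \<pi> g))"
  define Q where "Q = dataset_pmf \<mu> P n"
  have cardI: "real (card I) = N" unfolding I_def N_def by (simp add: card_cartesian_product)
  have "0 < card Vs * card Ps * card Gs" using fin by (simp add: card_gt_0_iff)
  hence "(1::real) \<le> real (card Vs * card Ps * card Gs)" by linarith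
  hence Npos: "1 \<le> N" unfolding N_def by simp
  have L0: "0 \<le> L" unfolding L_def using Npos dl by simp
  have expL: "exp (- L) = \<delta> / N" unfolding L_def using Npos dl by (simp add: exp_minus)
  have pBad: "measure_pmf.prob Q Bad \<le> 2 * \<delta>"
  proof -
    have "measure_pmf.prob Q Bad \<le> (\<Sum>t\<in>I. measure_pmf.prob Q (case t of (V, \<pi>, g) \<Rightarrow> Bp V \<pi> g \<union> Bm V \<pi> g))"
      unfolding Bad_def by (rule measure_UNION_le) (auto simp: I_def fin)
    also have "\<dots> \<le> (\<Sum>t\<in>I. 2 * exp (- L))"
    proof (rule sum_mono)
      fix t assume t: "t \<in> I"
      obtain V \<pi> g where tt: "t = (V, \<pi>, g)" and m: "V \<in> Vs" "\<pi> \<in> Ps" "g \<in> Gs"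
        using t unfolding I_def by auto
      have "measure_pmf.prob Q (Bp V \<pi> g \<union> Bm V \<pi> g) \<le> measure_pmf.prob Q (Bp V \<pi> g) + measure_pmf.prob Q (Bm V \<pi> g)"
        by (rule measure_Un_le) auto
      also have "\<dots> \<le> exp (- L) + exp (- L)"
        using triple_prob[OF st m L0, of n]
        unfolding Q_def Bp_def Bm_def thr_def dd_def W_def by (intro add_mono) auto
      finally show "measure_pmf.prob Q (case t of (V, \<pi>, g) \<Rightarrow> Bp V \<pi> g \<union> Bm V \<pi> g) \<le> 2 * exp (- L)"
        unfolding tt by simp
    qed
    also have "\<dots> = 2 * \<delta>" using cardI expL Npos by simp
    finally show ?thesis .
  qed
  have good: "UNIV - Bad \<subseteq> {D. \<forall>V\<in>Vs. \<forall>\<pi>\<in>Ps. \<forall>g\<in>Gs.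
                  (\<forall>g'\<in>Gs. emp_risk R \<gamma> lam n D g V \<pi> \<le> emp_risk R \<gamma> lam n D g' V \<pi>) \<longrightarrow>
                  \<bar>emp_risk R \<gamma> lam n D g V \<pi> - emp_risk R \<gamma> lam n D (bellman R P \<gamma> lam V \<pi>) V \<pi>\<bar>
                  \<le> 341 * (eps + sqrt (x * eps) + x)}"
  proof (safe)
    fix D V \<pi> g assume DB: "D \<notin> Bad" and V: "V \<in> Vs" and pi: "\<pi> \<in> Ps" and g: "g \<in> Gs"
      and minz: "\<forall>g'\<in>Gs. emp_risk R \<gamma> lam n D g V \<pi> \<le> emp_risk R \<gamma> lam n D g' V \<pi>"
    define \<Delta> where "\<Delta> h = emp_risk R \<gamma> lam n D h V \<pi> - emp_risk R \<gamma> lam n D (bellman R P \<gamma> lam V \<pi>) V \<pi>" for h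
    have dev: "\<bar>\<Delta> h - dd V \<pi> h\<bar> \<le> 22 * sqrt (dd V \<pi> h * x) + 220 * x" if h: "h \<in> Gs" for h
    proof -
      have "D \<notin> Bp V \<pi> h" "D \<notin> Bm V \<pi> h" using DB V pi h unfolding Bad_def I_def by auto
      hence "(\<Sum>i<n. ell R P \<gamma> lam V \<pi> h (D i) - dd V \<pi> h) \<le> thr V \<pi> h"
        "(\<Sum>i<n. dd V \<pi> h - ell R P \<gamma> lam V \<pi> h (D i)) \<le> thr V \<pi> h"
        unfolding Bp_def Bm_def by auto
      hence "\<bar>(\<Sum>i<n. ell R P \<gamma> lam V \<pi> h (D i)) - real n * dd V \<pi> h\<bar> \<le> thr V \<pi> h"
        by (simp add: sum_subtractf abs_le_iff)
      moreover have "0 \<le> dd V \<pi> h" unfolding dd_def using triple_facts(4)[OF st V pi h] .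
      ultimately have "\<bar>(\<Sum>i<n. ell R P \<gamma> lam V \<pi> h (D i)) / real n - dd V \<pi> h\<bar>
          \<le> 22 * sqrt (dd V \<pi> h * (W\<^sup>2 * L / real n)) + 220 * (W\<^sup>2 * L / real n)"
        using conv[OF n _ L0] unfolding thr_def by blast
      thus ?thesis unfolding \<Delta>_def emp_risk_diff x_def .
    qed
    define m where "m = Min ((\<lambda>h. dd V \<pi> h) ` Gs)"
    have "m \<in> (\<lambda>h. dd V \<pi> h) ` Gs" unfolding m_def using fin by (intro Min_in) auto
    then obtain gs where gs: "gs \<in> Gs" "dd V \<pi> gs = m" by auto
    have "m \<le> eps"
    proof -
      have "eps = Max ((\<lambda>(V, \<pi>). Min ((\<lambda>h. dd V \<pi> h) ` Gs)) ` (Vs \<times> Ps))"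
        unfolding eps_def eps_approx_def dd_def by simp
      moreover have "m \<in> (\<lambda>(V, \<pi>). Min ((\<lambda>h. dd V \<pi> h) ` Gs)) ` (Vs \<times> Ps)"
        unfolding m_def using V pi by force
      ultimately show ?thesis using fin by (simp add: Max_ge)
    qed
    have le: "\<Delta> g \<le> \<Delta> gs" unfolding \<Delta>_def using minz gs(1) by simp
    have x0: "0 \<le> x" unfolding x_def using L0 by simp
    show "\<bar>emp_risk R \<gamma> lam n D g V \<pi> - emp_risk R \<gamma> lam n D (bellman R P \<gamma> lam V \<pi>) V \<pi>\<bar>
                  \<le> 341 * (eps + sqrt (x * eps) + x)"
      using det_bound[OF dev[OF g] dev[OF gs(1)] le _ _ _ x0]
        triple_facts(4)[OF st V pi g] triple_facts(4)[OF st V pi gs(1)] gs(2) \<open>m \<le> eps\<close>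
      unfolding \<Delta>_def dd_def by simp
  qed
  have "1 - 2 * \<delta> \<le> 1 - measure_pmf.prob Q Bad" using pBad by simp
  also have "\<dots> = measure_pmf.prob Q (UNIV - Bad)"
    using measure_pmf.prob_compl[of Bad Q] by simp
  also have "\<dots> \<le> measure_pmf.prob Q {D. \<forall>V\<in>Vs. \<forall>\<pi>\<in>Ps. \<forall>g\<in>Gs.
                  (\<forall>g'\<in>Gs. emp_risk R \<gamma> lam n D g V \<pi> \<le> emp_risk R \<gamma> lam n D g' V \<pi>) \<longrightarrow>
                  \<bar>emp_risk R \<gamma> lam n D g V \<pi> - emp_risk R \<gamma> lam n D (bellman R P \<gamma> lam V \<pi>) V \<pi>\<bar>
                  \<le> 341 * (eps + sqrt (x * eps) + x)}"
    by (rule measure_pmf.finite_measure_mono[OF good]) simp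
  finally show "let \<epsilon> = eps_approx \<mu> R P \<gamma> lam Vs Ps Gs;
           \<iota> = (Vmax A Rmax \<gamma> lam)\<^sup>2 *
               ln (real (card Vs) * real (card Ps) * real (card Gs) / \<delta>)
       in measure_pmf.prob (dataset_pmf \<mu> P n)
            {D. \<forall>V\<in>Vs. \<forall>\<pi>\<in>Ps. \<forall>g\<in>Gs.
                  (\<forall>g'\<in>Gs. emp_risk R \<gamma> lam n D g V \<pi> \<le> emp_risk R \<gamma> lam n D g' V \<pi>) \<longrightarrow>
                  \<bar>emp_risk R \<gamma> lam n D g V \<pi> - emp_risk R \<gamma> lam n D (bellman R P \<gamma> lam V \<pi>) V \<pi>\<bar>
                  \<le> 341 * (\<epsilon> + sqrt (\<iota> / real n * \<epsilon>) + \<iota> / real n)}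
          \<ge> 1 - 2 * \<delta>"
    unfolding Let_def Q_def eps_def x_def W_def L_def N_def by simp
qed

end
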